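(* Let $0\le b\le1$ and $0\le\alpha<1$, and let $r_0=r_0(\alpha)$ be the real root in $(0,1)$ of the equation \[2\big(1-\alpha+2(2-\alpha)(1-b)r\big)(1-r)^4=1-\alpha+4r+(1+\alpha)r^2.\] Let $\mathcal{F}$ be the class of functions $f\in\mathcal{A}_b$, $f(z)=z+\sum_{n\ge2}a_nz^n$, with $|a_n|\le n$ for all $n\ge3$. Then: (i) every $f\in\mathcal{F}$ satisfies $\left|\frac{zf''(z)}{f'(z)}\right|\le1-\alpha$ for $|z|\le r_0$; (ii) $r_0(\alpha)$ is the radius of convexity of order $\alpha$ of $\mathcal{F}$; (iii) $r_0(1/2)$ is the radius of uniform convexity of $\mathcal{F}$. All results are sharp: the function $f_0(z)=2z+2(1-b)z^2-\frac{z}{(1-z)^2}=z-2bz^2-\sum_{n\ge3}nz^n$ belongs to $\mathcal{F}$ and satisfies $\left|\frac{zf_0''(z)}{f_0'(z)}\right|=1-\alpha$ and $\operatorname{Re}\frac{zf_0''(z)}{f_0'(z)}=\alpha-1$ at $z=r_0$.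
   Context: $\mathbb{D}=\{z\in\mathbb{C}:|z|<1\}$. For $0\le b\le1$, $\mathcal{A}_b$ is the class of analytic functions $f$ on $\mathbb{D}$ of the form $f(z)=z+a_2z^2+a_3z^3+\cdots$ with $|a_2|=2b$. For a class $\mathcal{F}$ of analytic functions on $\mathbb{D}$ normalized by $f(0)=0$, $f'(0)=1$, and $0\le\alpha<1$, the radius of convexity of order $\alpha$ of $\mathcal{F}$ is the supremum of $r\in(0,1]$ such that every $f\in\mathcal{F}$ satisfies $f'(z)\ne0$ and $\operatorname{Re}\big(1+zf''(z)/f'(z)\big)>\alpha$ for $|z|<r$. The radius of uniform convexity of $\mathcal{F}$ is the supremum of $r\in(0,1]$ such that every $f\in\mathcal{F}$ satisfies $f'(z)\ne0$ and $\operatorname{Re}\big(1+zf''(z)/f'(z)\big)>\left|zf''(z)/f'(z)\right|$ for $|z|<r$. *)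

theory Defs
  imports "HOL-Analysis.Analysis"
begin

definition taylor_coeff :: "(complex \<Rightarrow> complex) \<Rightarrow> nat \<Rightarrow> complex" where
  "taylor_coeff f n = (deriv ^^ n) f 0 / of_nat (fact n)"

definition class_A :: "real \<Rightarrow> (complex \<Rightarrow> complex) set" where
  "class_A b = {f. f holomorphic_on ball 0 1 \<and> f 0 = 0 \<and> deriv f 0 = 1 \<and>
                   cmod (taylor_coeff f 2) = 2 * b}"

definition class_F :: "real \<Rightarrow> (complex \<Rightarrow> complex) set" where
  "class_F b = {f \<in> class_A b. \<forall>n\<ge>3. cmod (taylor_coeff f n) \<le> real n}"

definition radius_convexity_order ::
  "real \<Rightarrow> (complex \<Rightarrow> complex) set \<Rightarrow> real" where
  "radius_convexity_order \<alpha> F = Sup {r \<in> {0<..1}. \<forall>f\<in>F. \<forall>z. cmod z < r \<longrightarrow>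
      deriv f z \<noteq> 0 \<and> Re (1 + z * deriv (deriv f) z / deriv f z) > \<alpha>}"

definition radius_uniform_convexity ::
  "(complex \<Rightarrow> complex) set \<Rightarrow> real" where
  "radius_uniform_convexity F = Sup {r \<in> {0<..1}. \<forall>f\<in>F. \<forall>z. cmod z < r \<longrightarrow>
      deriv f z \<noteq> 0 \<and>
      Re (1 + z * deriv (deriv f) z / deriv f z) > cmod (z * deriv (deriv f) z / deriv f z)}"

definition root_eq :: "real \<Rightarrow> real \<Rightarrow> real \<Rightarrow> bool" where
  "root_eq b \<alpha> r \<longleftrightarrow>
     2 * (1 - \<alpha> + 2 * (2 - \<alpha>) * (1 - b) * r) * (1 - r) ^ 4 = 1 - \<alpha> + 4 * r + (1 + \<alpha>) * r ^ 2"

definition f0 :: "real \<Rightarrow> complex \<Rightarrow> complex" where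
  "f0 b z = 2 * z + 2 * of_real (1 - b) * z ^ 2 - z / (1 - z) ^ 2"

end

theory Submission imports Defs "HOL-Complex_Analysis.Cauchy_Integral_Formula" begin

lemma geo_n:
  fixes c::complex
  assumes "norm c < 1"
  shows "(\<lambda>n. of_nat n * c^n) sums (c / (1 - c)\<^sup>2)"
proof -
  have "(\<lambda>n. c * z ^ n) sums (c / (1 - z))" if "norm z < 1" for z
    using geometric_sums sums_mult that by fastforce
  moreover have "((\<lambda>z. c / (1 - z)) has_field_derivative (c / (1 - c)\<^sup>2)) (at c)"
      using assms by (auto intro!: derivative_eq_intros simp add: semiring_normalization_rules)
  ultimately have "(\<lambda>n. diffs (\<lambda>n. c) n * c ^ n) sums (c / (1 - c)\<^sup>2)"
    using assms by (intro termdiffs_sums_strong)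
  then have "(\<lambda>n. of_nat (Suc n) * c ^ (Suc n)) sums (c / (1 - c)\<^sup>2)"
    unfolding diffs_def by (simp add: power_eq_if mult.assoc)
  then show ?thesis
    by (subst (asm) sums_Suc_iff) (auto simp add: mult.commute)
qed

definition cf :: "real \<Rightarrow> nat \<Rightarrow> complex" where
  "cf b n = (if n = 1 then 2 else 0) + (if n = 2 then 2 * of_real (1-b) else 0) - of_nat n"

lemma f0_sums:
  assumes "norm z < 1"
  shows "(\<lambda>n. cf b n * z^n) sums f0 b z"
proof -
  have "(\<lambda>n. (if n = 1 then 2 * z^n else 0) + (if n = 2 then 2 * of_real (1-b) * z^n else 0)
      - of_nat n * z^n) sums (2 * z^1 + 2 * of_real (1-b) * z^2 - z / (1-z)^2)"
    by (intro sums_add sums_diff sums_single geo_n assms)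
  moreover have "(\<lambda>n. cf b n * z^n) = (\<lambda>n. (if n = 1 then 2 * z^n else 0) + (if n = 2 then 2 * of_real (1-b) * z^n else 0)
      - of_nat n * z^n)" by (auto simp: fun_eq_iff cf_def algebra_simps)
  ultimately show ?thesis unfolding f0_def by simp
qed

lemma f0_holo: "f0 b holomorphic_on ball 0 1"
proof -
  have "1 - z \<noteq> 0" if "z \<in> ball 0 1" for z :: complex
    using that by auto
  then show ?thesis unfolding f0_def by (intro holomorphic_intros) auto
qed

lemma series_derivs:
  assumes holo: "f holomorphic_on ball 0 1"
    and s: "\<And>z. norm z < 1 \<Longrightarrow> (\<lambda>n. a n * z^n) sums f z"
    and z: "norm z < 1"
  shows "(\<lambda>n. diffs a n * z^n) sums deriv f z"
    "(\<lambda>n. diffs (diffs a) n * z^n) sums deriv (deriv f) z"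
proof -
  have d1: "\<And>w. norm w < 1 \<Longrightarrow> (\<lambda>n. diffs a n * w^n) sums deriv f w"
    by (rule termdiffs_sums_strong[OF s]) (auto intro!: holomorphic_derivI[OF holo])
  then show "(\<lambda>n. diffs a n * z^n) sums deriv f z" using z .
  have "deriv f holomorphic_on ball 0 1" by (rule holomorphic_deriv[OF holo]) auto
  then have "(deriv f has_field_derivative deriv (deriv f) z) (at z)"
    using z by (intro holomorphic_derivI) auto
  then show "(\<lambda>n. diffs (diffs a) n * z^n) sums deriv (deriv f) z"
    by (intro termdiffs_sums_strong[OF d1 _ z])
qed

lemma f0_fps: "f0 b has_fps_expansion Abs_fps (cf b)"
proof -
  have "summable (\<lambda>n. cf b n * (1/2)^n)" using f0_sums[of "1/2" b] by (auto dest: sums_summable)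
  then have "conv_radius (cf b) \<ge> norm (1/2 :: complex)" by (rule conv_radius_geI)
  then have r: "fps_conv_radius (Abs_fps (cf b)) > 0"
    unfolding fps_conv_radius_def by (auto elim!: less_le_trans[rotated])
  have "eventually (\<lambda>z. z \<in> ball 0 1) (nhds (0::complex))"
    by (intro eventually_nhds_in_open) auto
  then have "eventually (\<lambda>z. eval_fps (Abs_fps (cf b)) z = f0 b z) (nhds 0)"
    by eventually_elim (auto simp: eval_fps_def intro!: sums_unique[symmetric] f0_sums)
  with r show ?thesis unfolding has_fps_expansion_def by auto
qed

lemma taylor_f0: "taylor_coeff (f0 b) n = cf b n"
  using fps_nth_fps_expansion[OF f0_fps, of b n] by (simp add: taylor_coeff_def)

lemma f0_in_F: assumes "0 \<le> b" shows "f0 b \<in> class_F b"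
proof -
  have "deriv (f0 b) 0 = 1" using taylor_f0[of b 1] by (simp add: taylor_coeff_def cf_def)
  moreover have "cmod (taylor_coeff (f0 b) 2) = 2 * b"
    using assms by (simp add: taylor_f0 cf_def norm_mult)
  moreover have "cmod (taylor_coeff (f0 b) n) \<le> real n" if "n \<ge> 3" for n
    using that by (simp add: taylor_f0 cf_def)
  ultimately show ?thesis using f0_holo by (auto simp: class_F_def class_A_def f0_def)
qed

lemma of_real_sums_eq:
  assumes "(\<lambda>i. complex_of_real (g i)) sums s"
  shows "summable g \<and> s = of_real (suminf g)"
proof -
  have sg: "summable g" using sums_summable[OF assms] summable_of_real_iff by blast
  then have "(\<lambda>i. complex_of_real (g i)) sums of_real (suminf g)"
    by (simp add: sums_of_real_iff summable_sums)
  with assms sg show ?thesis using sums_unique2 by blast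
qed

definition T1 :: "real \<Rightarrow> real" where "T1 r = (\<Sum>i. real ((i+3)^2) * r^(i+2))"
definition T2 :: "real \<Rightarrow> real" where "T2 r = (\<Sum>i. real ((i+3)^2*(i+2)) * r^(i+2))"

lemma f0_real:
  assumes r: "0 \<le> r" "r < 1"
  shows "summable (\<lambda>i. real ((i+3)^2) * r^(i+2))"
    "deriv (f0 b) (of_real r) = of_real (1 - 4*b*r - T1 r)"
    "summable (\<lambda>i. real ((i+3)^2*(i+2)) * r^(i+2))"
    "of_real r * deriv (deriv (f0 b)) (of_real r) = of_real (- 4*b*r - T2 r)"
proof -
  define z where "z = complex_of_real r"
  have z: "norm z < 1" using r by (simp add: z_def)
  note sd = series_derivs[OF f0_holo f0_sums z]
  have "(\<lambda>i. diffs (cf b) (i+2) * z^(i+2)) sums (deriv (f0 b) z - (\<Sum>i<2. diffs (cf b) i * z^i))"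
    using sd(1) by (subst sums_iff_shift) simp
  moreover have "(\<lambda>i. diffs (cf b) (i+2) * z^(i+2)) = (\<lambda>i. of_real (- (real ((i+3)^2) * r^(i+2))))"
    by (auto simp: fun_eq_iff diffs_def cf_def z_def power2_eq_square algebra_simps)
  moreover have "(\<Sum>i<2. diffs (cf b) i * z^i) = 1 - 4 * b * z"
    by (simp add: diffs_def cf_def eval_nat_numeral algebra_simps)
  ultimately have "(\<lambda>i. of_real (- (real ((i+3)^2) * r^(i+2)))) sums (deriv (f0 b) z - (1 - 4*b*z))"
    by simp
  from of_real_sums_eq[OF this] have
    "summable (\<lambda>i. - (real ((i+3)^2) * r^(i+2)))"
    "deriv (f0 b) z - (1 - 4*b*z) = of_real (\<Sum>i. - (real ((i+3)^2) * r^(i+2)))" by auto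
  then show s1: "summable (\<lambda>i. real ((i+3)^2) * r^(i+2))"
    and "deriv (f0 b) (of_real r) = of_real (1 - 4*b*r - T1 r)"
    by (auto simp: T1_def suminf_minus summable_minus_iff z_def algebra_simps)
  have "(\<lambda>n. z * (diffs (diffs (cf b)) n * z^n)) sums (z * deriv (deriv (f0 b)) z)"
    using sd(2) by (rule sums_mult)
  then have "(\<lambda>i. z * (diffs (diffs (cf b)) (i+1) * z^(i+1))) sums (z * deriv (deriv (f0 b)) z - (\<Sum>i<1. z * (diffs (diffs (cf b)) i * z^i)))"
    by (subst sums_iff_shift) simp
  moreover have "(\<lambda>i. z * (diffs (diffs (cf b)) (i+1) * z^(i+1))) = (\<lambda>i. of_real (- (real ((i+3)^2*(i+2)) * r^(i+2))))"
    by (auto simp: fun_eq_iff diffs_def cf_def z_def power2_eq_square algebra_simps)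
  moreover have "(\<Sum>i<1. z * (diffs (diffs (cf b)) i * z^i)) = - 4 * b * z"
    by (simp add: diffs_def cf_def eval_nat_numeral algebra_simps)
  ultimately have "(\<lambda>i. of_real (- (real ((i+3)^2*(i+2)) * r^(i+2)))) sums (z * deriv (deriv (f0 b)) z + 4*b*z)"
    by simp
  from of_real_sums_eq[OF this] have
    "summable (\<lambda>i. - (real ((i+3)^2*(i+2)) * r^(i+2)))"
    "z * deriv (deriv (f0 b)) z + 4*b*z = of_real (\<Sum>i. - (real ((i+3)^2*(i+2)) * r^(i+2)))" by auto
  then have ss: "summable (\<lambda>i. real ((i+3)^2*(i+2)) * r^(i+2))"
    and e: "z * deriv (deriv (f0 b)) z + 4*b*z = - of_real (T2 r)"
    unfolding T2_def using summable_minus_iff[of "\<lambda>i. real ((i+3)^2*(i+2)) * r^(i+2)"]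
       suminf_minus[of "\<lambda>i. real ((i+3)^2*(i+2)) * r^(i+2)"] by auto
  show "summable (\<lambda>i. real ((i+3)^2*(i+2)) * r^(i+2))" by (fact ss)
  show "of_real r * deriv (deriv (f0 b)) (of_real r) = of_real (- 4*b*r - T2 r)"
    using e unfolding z_def by (simp add: algebra_simps) (metis add.commute add_eq_0_iff eq_diff_eq minus_diff_eq minus_minus)
qed

lemma gen_bounds:
  assumes f: "f \<in> class_F b" and z: "norm z < 1"
  shows "norm (deriv f z) \<ge> 1 - 4*b*norm z - T1 (norm z)"
    "norm (z * deriv (deriv f) z) \<le> 4*b*norm z + T2 (norm z)"
proof -
  define a where "a = taylor_coeff f"
  define r where "r = norm z"
  have r: "0 \<le> r" "r < 1" using z by (auto simp: r_def)
  have holo: "f holomorphic_on ball 0 1" and f00: "f 0 = 0" and f1: "deriv f 0 = 1"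
    and a2: "norm (a 2) = 2*b" and an: "\<And>n. n \<ge> 3 \<Longrightarrow> norm (a n) \<le> real n"
    using f by (auto simp: class_F_def class_A_def a_def)
  have a1: "a 1 = 1" using f1 by (simp add: a_def taylor_coeff_def)
  have s: "(\<lambda>n. a n * w^n) sums f w" if "norm w < 1" for w
    using holomorphic_power_series[OF holo, of w] that by (simp add: a_def taylor_coeff_def)
  note sd = series_derivs[OF holo s z]
  have an3: "norm (a (i+3)) \<le> real (i+3)" for i using an[of "i+3"] by simp
  have "(\<lambda>i. diffs a (i+2) * z^(i+2)) sums (deriv f z - (\<Sum>i<2. diffs a i * z^i))"
    using sd(1) by (subst sums_iff_shift) simp
  moreover have "(\<Sum>i<2. diffs a i * z^i) = 1 + 2 * a 2 * z"
    using a1 by (simp add: diffs_def eval_nat_numeral)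
  ultimately have t1: "(\<lambda>i. diffs a (i+2) * z^(i+2)) sums (deriv f z - (1 + 2 * a 2 * z))" by simp
  have "norm (diffs a (i+2) * z^(i+2)) \<le> real ((i+3)^2) * r^(i+2)" for i
  proof -
    have e: "diffs a (i+2) = of_nat (i+3) * a (i+3)" by (simp add: diffs_def eval_nat_numeral)
    have "norm (diffs a (i+2) * z^(i+2)) = real (i+3) * norm (a (i+3)) * r^(i+2)"
      unfolding e norm_mult norm_power norm_of_nat r_def ..
    also have "\<dots> \<le> real (i+3) * real (i+3) * r^(i+2)"
      using an3[of i] r by (intro mult_right_mono mult_left_mono) auto
    finally show ?thesis by (simp add: power2_eq_square)
  qed
  then have "norm (deriv f z - (1 + 2 * a 2 * z)) \<le> T1 r"
    unfolding T1_def sums_unique[OF t1] by (intro norm_suminf_le f0_real(1)[OF r]) 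
  moreover have "norm (1 + 2 * a 2 * z) \<ge> 1 - 4*b*r"
  proof -
    have "norm (1 + 2 * a 2 * z) \<ge> norm (1::complex) - norm (2 * a 2 * z)" by (metis norm_diff_ineq diff_minus_eq_add norm_minus_cancel)
    moreover have "norm (2 * a 2 * z) = 4*b*r" by (simp add: norm_mult a2 r_def)
    ultimately show ?thesis by simp
  qed
  moreover have "norm (deriv f z) \<ge> norm (1 + 2 * a 2 * z) - norm (deriv f z - (1 + 2 * a 2 * z))"
    using norm_triangle_sub[of "1 + 2*a 2*z" "deriv f z"] norm_minus_commute[of "1 + 2*a 2*z" "deriv f z"] by linarith
  ultimately show "norm (deriv f z) \<ge> 1 - 4*b*norm z - T1 (norm z)" unfolding r_def by linarith
  have "(\<lambda>n. z * (diffs (diffs a) n * z^n)) sums (z * deriv (deriv f) z)"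
    using sd(2) by (rule sums_mult)
  then have "(\<lambda>i. z * (diffs (diffs a) (i+1) * z^(i+1))) sums (z * deriv (deriv f) z - (\<Sum>i<1. z * (diffs (diffs a) i * z^i)))"
    by (subst sums_iff_shift) simp
  moreover have "(\<Sum>i<1. z * (diffs (diffs a) i * z^i)) = 2 * a 2 * z"
    by (simp add: diffs_def eval_nat_numeral)
  ultimately have t2: "(\<lambda>i. z * (diffs (diffs a) (i+1) * z^(i+1))) sums (z * deriv (deriv f) z - 2 * a 2 * z)" by argo
  have "norm (z * (diffs (diffs a) (i+1) * z^(i+1))) \<le> real ((i+3)^2*(i+2)) * r^(i+2)" for i
  proof -
    have e: "diffs (diffs a) (i+1) = of_nat (i+2) * (of_nat (i+3) * a (i+3))" by (simp add: diffs_def eval_nat_numeral)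
    have "norm (z * (diffs (diffs a) (i+1) * z^(i+1))) = r * (real (i+2) * (real (i+3) * norm (a (i+3))) * r^(i+1))"
      unfolding e norm_mult norm_power norm_of_nat r_def ..
    also have "\<dots> = real (i+2) * real (i+3) * norm (a (i+3)) * r^(i+2)" by (simp add: algebra_simps)
    also have "\<dots> \<le> real (i+2) * real (i+3) * real (i+3) * r^(i+2)"
      using an3[of i] r by (intro mult_right_mono mult_left_mono) auto
    finally show ?thesis by (simp add: power2_eq_square algebra_simps)
  qed
  then have "norm (z * deriv (deriv f) z - 2 * a 2 * z) \<le> T2 r"
    unfolding T2_def sums_unique[OF t2] by (intro norm_suminf_le f0_real(3)[OF r]) 
  moreover have "norm (2 * a 2 * z) = 4*b*r" by (simp add: norm_mult a2 r_def)
  moreover have "norm (z * deriv (deriv f) z) \<le> norm (2 * a 2 * z) + norm (z * deriv (deriv f) z - 2 * a 2 * z)"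
    by (metis norm_triangle_sub add.commute)
  ultimately show "norm (z * deriv (deriv f) z) \<le> 4*b*norm z + T2 (norm z)" unfolding r_def by linarith
qed

lemma inv_pow_deriv0:
  assumes "w \<noteq> (0::complex)"
  shows "((\<lambda>w. inverse (w ^ Suc k)) has_field_derivative (- of_nat (Suc k) * inverse (w^(Suc (Suc k))))) (at w)"
proof -
  show ?thesis
    apply (rule derivative_eq_intros refl)+
    using assms apply simp
    using assms apply (simp add: field_simps)
    done
qed

lemma inv_pow_deriv:
  assumes "z \<noteq> (1::complex)"
  shows "((\<lambda>z. inverse ((1 - z) ^ Suc k)) has_field_derivative (of_nat (Suc k) * inverse ((1-z)^(Suc (Suc k))))) (at z)"
proof -
  have nz: "1 - z \<noteq> 0" using assms by auto
  have "((\<lambda>z. 1 - z) has_field_derivative -1) (at z)" by (auto intro!: derivative_eq_intros)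
  from DERIV_chain2[OF inv_pow_deriv0[OF nz, of k] this] show ?thesis by (simp add: algebra_simps)
qed

definition g1 :: "real \<Rightarrow> complex \<Rightarrow> complex" where
  "g1 b z = 2 + 4 * of_real (1-b) * z - inverse ((1-z)^2) - 2 * z * inverse ((1-z)^3)"
definition g2 :: "real \<Rightarrow> complex \<Rightarrow> complex" where
  "g2 b z = 4 * of_real (1-b) - 4 * inverse ((1-z)^3) - 6 * z * inverse ((1-z)^4)"

lemma f0_deriv1:
  assumes "z \<noteq> 1"
  shows "(f0 b has_field_derivative g1 b z) (at z)"
proof -
  have e: "f0 b = (\<lambda>z. 2 * z + 2 * of_real (1 - b) * z ^ 2 - z * inverse ((1 - z) ^ Suc (Suc 0)))"
    by (rule ext) (simp only: f0_def divide_inverse numeral_2_eq_2)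
  show ?thesis unfolding e g1_def
    apply (rule inv_pow_deriv[OF assms] derivative_eq_intros refl)+
    apply (simp add: algebra_simps eval_nat_numeral)
    done
qed

lemma f0_deriv2:
  assumes "z \<noteq> 1"
  shows "(g1 b has_field_derivative g2 b z) (at z)"
proof -
  have e: "g1 b = (\<lambda>z. 2 + 4 * of_real (1-b) * z - inverse ((1-z)^Suc (Suc 0)) - 2 * z * inverse ((1-z)^Suc (Suc (Suc 0))))"
    by (rule ext) (simp only: g1_def numeral_2_eq_2 numeral_3_eq_3)
  show ?thesis unfolding e g2_def
    apply (rule inv_pow_deriv[OF assms] derivative_eq_intros refl)+
    apply (simp add: algebra_simps eval_nat_numeral)
    done
qed

lemma f0_d1: "z \<noteq> 1 \<Longrightarrow> deriv (f0 b) z = g1 b z"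
  by (rule DERIV_imp_deriv[OF f0_deriv1])

lemma f0_d2: assumes "norm z < 1" shows "deriv (deriv (f0 b)) z = g2 b z"
proof -
  have "(deriv (f0 b) has_field_derivative g2 b z) (at z)"
  proof (rule has_field_derivative_transform_within_open[OF f0_deriv2, of _ "ball 0 1"])
    show "z \<noteq> 1" using assms by auto
  next
    fix x :: complex assume "x \<in> ball 0 1"
    then have "x \<noteq> 1" by auto
    then show "g1 b x = deriv (f0 b) x" by (simp add: f0_d1)
  qed (use assms in auto)
  then show ?thesis by (rule DERIV_imp_deriv)
qed

lemma closed_forms:
  assumes r: "0 \<le> r" "r < 1"
  shows "1 - 4*b*r - T1 r = 2 + 4*(1-b)*r - 1/(1-r)^2 - 2*r/(1-r)^3"
    "- 4*b*r - T2 r = r * (4*(1-b) - 4/(1-r)^3 - 6*r/(1-r)^4)"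
proof -
  have n: "norm (complex_of_real r) < 1" using r by simp
  have "complex_of_real (1 - 4*b*r - T1 r) = g1 b (of_real r)"
    using f0_real(2)[OF r, of b] f0_d1[of "of_real r" b] n by auto
  also have "\<dots> = of_real (2 + 4*(1-b)*r - 1/(1-r)^2 - 2*r/(1-r)^3)"
    by (simp add: g1_def divide_inverse)
  finally show "1 - 4*b*r - T1 r = 2 + 4*(1-b)*r - 1/(1-r)^2 - 2*r/(1-r)^3"
    using of_real_eq_iff by blast
  have "complex_of_real (- 4*b*r - T2 r) = of_real r * g2 b (of_real r)"
    using f0_real(4)[OF r, of b] f0_d2[OF n, of b] by auto
  also have "\<dots> = of_real (r * (4*(1-b) - 4/(1-r)^3 - 6*r/(1-r)^4))"
    by (simp add: g2_def divide_inverse)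
  finally show "- 4*b*r - T2 r = r * (4*(1-b) - 4/(1-r)^3 - 6*r/(1-r)^4)"
    using of_real_eq_iff by blast
qed

lemma root_balance:
  assumes r: "0 < r" "r < 1" and eq: "root_eq b \<alpha> r"
  shows "4*b*r + T2 r = (1-\<alpha>) * (1 - 4*b*r - T1 r)"
proof -
  have x: "(1-r) > 0" using r by simp
  have e1: "1 - 4*b*r - T1 r = 2 + 4*(1-b)*r - 1/(1-r)^2 - 2*r/(1-r)^3"
    and e2: "4*b*r + T2 r = - (r * (4*(1-b) - 4/(1-r)^3 - 6*r/(1-r)^4))"
    using closed_forms[of r b] r by auto
  have "(1-\<alpha>) * (2 + 4*(1-b)*r - 1/(1-r)^2 - 2*r/(1-r)^3) + r * (4*(1-b) - 4/(1-r)^3 - 6*r/(1-r)^4)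
      = (2 * (1 - \<alpha> + 2 * (2 - \<alpha>) * (1 - b) * r) * (1 - r) ^ 4 - (1 - \<alpha> + 4 * r + (1 + \<alpha>) * r ^ 2)) / (1-r)^4"
    using x by (simp add: field_simps) (simp add: algebra_simps eval_nat_numeral)
  also have "\<dots> = 0" using eq by (simp add: root_eq_def)
  finally show ?thesis unfolding e1 e2 by linarith
qed

lemma T_mono:
  assumes "0 \<le> r" "r \<le> s" "s < 1"
  shows "T1 r \<le> T1 s" "T2 r \<le> T2 s"
proof -
  have r: "0 \<le> r" "r < 1" and s: "0 \<le> s" "s < 1" using assms by auto
  have p: "r^(i+2) \<le> s^(i+2)" for i using assms by (intro power_mono) auto
  show "T1 r \<le> T1 s" unfolding T1_def
    by (intro suminf_le f0_real(1)[OF r] f0_real(1)[OF s] mult_left_mono p) auto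
  show "T2 r \<le> T2 s" unfolding T2_def
    by (intro suminf_le f0_real(3)[OF r] f0_real(3)[OF s] mult_left_mono p) auto
qed

lemma T2_strict:
  assumes "0 \<le> r" "r < s" "s < 1"
  shows "T2 r < T2 s"
proof -
  have r: "0 \<le> r" "r < 1" and s: "0 \<le> s" "s < 1" using assms by auto
  have p: "r^(i+2) \<le> s^(i+2)" for i using assms by (intro power_mono) auto
  have "0 < (\<Sum>i. real ((i+3)^2*(i+2)) * s^(i+2) - real ((i+3)^2*(i+2)) * r^(i+2))"
  proof (rule suminf_pos2[where i=0])
    show "summable (\<lambda>i. real ((i+3)^2*(i+2)) * s^(i+2) - real ((i+3)^2*(i+2)) * r^(i+2))"
      by (intro summable_diff f0_real(3)[OF r] f0_real(3)[OF s])
    show "0 \<le> real ((i+3)^2*(i+2)) * s^(i+2) - real ((i+3)^2*(i+2)) * r^(i+2)" for i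
      using mult_left_mono[OF p[of i], of "real ((i+3)^2*(i+2))"] by simp
    have "r^2 < s^2" using assms by (intro power_strict_mono) auto
    then show "0 < real ((0+3)^2*(0+2)) * s^(0+2) - real ((0+3)^2*(0+2)) * r^(0+2)" by (simp add: power2_eq_square)
  qed
  also have "\<dots> = T2 s - T2 r" unfolding T2_def
    by (rule suminf_diff[symmetric]) (intro f0_real(3)[OF r] f0_real(3)[OF s])+
  finally show ?thesis by simp
qed

lemma T2_pos: assumes "0 < r" "r < 1" shows "T2 r > 0"
proof -
  have "T2 0 = 0" by (simp add: T2_def)
  with T2_strict[of 0 r] assms show ?thesis by simp
qed

lemma key:
  assumes b: "0 \<le> b" and al: "0 \<le> \<alpha>" "\<alpha> < 1" and r: "0 < r0" "r0 < 1" "root_eq b \<alpha> r0"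
    and f: "f \<in> class_F b" and z: "norm z \<le> r0"
  shows "deriv f z \<noteq> 0 \<and> norm (z * deriv (deriv f) z / deriv f z) \<le> 1 - \<alpha> \<and>
         (norm z < r0 \<longrightarrow> norm (z * deriv (deriv f) z / deriv f z) < 1 - \<alpha>)"
proof -
  define \<rho> where "\<rho> = norm z"
  have \<rho>: "0 \<le> \<rho>" "\<rho> \<le> r0" "\<rho> < 1" using z r by (auto simp: \<rho>_def)
  have bal: "4*b*r0 + T2 r0 = (1-\<alpha>) * (1 - 4*b*r0 - T1 r0)" by (rule root_balance[OF r])
  have "4*b*r0 + T2 r0 > 0" using T2_pos[OF r(1,2)] b r by (simp add: add_nonneg_pos)
  then have D1pos: "1 - 4*b*r0 - T1 r0 > 0" using bal al by (simp add: zero_less_mult_iff)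
  have T1m: "T1 \<rho> \<le> T1 r0" and T2m: "T2 \<rho> \<le> T2 r0" using T_mono[of \<rho> r0] \<rho> r by auto
  have bm: "4*b*\<rho> \<le> 4*b*r0" using b \<rho> by (simp add: mult_left_mono)
  have D1m: "1 - 4*b*\<rho> - T1 \<rho> \<ge> 1 - 4*b*r0 - T1 r0" using T1m bm by linarith
  have zz: "norm z < 1" using \<rho> by (simp add: \<rho>_def)
  have g1: "norm (deriv f z) \<ge> 1 - 4*b*\<rho> - T1 \<rho>" using gen_bounds(1)[OF f zz] by (simp add: \<rho>_def)
  have g2: "norm (z * deriv (deriv f) z) \<le> 4*b*\<rho> + T2 \<rho>" using gen_bounds(2)[OF f zz] by (simp add: \<rho>_def)
  have fpos: "norm (deriv f z) > 0" using g1 D1m D1pos by linarith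
  have "(1-\<alpha>) * (1 - 4*b*r0 - T1 r0) \<le> (1-\<alpha>) * norm (deriv f z)"
    using al g1 D1m by (intro mult_left_mono) auto
  then have up: "4*b*r0 + T2 r0 \<le> (1-\<alpha>) * norm (deriv f z)" using bal by simp
  have "norm (z * deriv (deriv f) z) \<le> (1-\<alpha>) * norm (deriv f z)" using g2 T2m bm up by linarith
  then have A: "norm (z * deriv (deriv f) z / deriv f z) \<le> 1 - \<alpha>"
    using fpos by (simp add: norm_divide divide_le_eq)
  have B: "norm (z * deriv (deriv f) z / deriv f z) < 1 - \<alpha>" if "norm z < r0"
  proof -
    have "T2 \<rho> < T2 r0" using T2_strict[of \<rho> r0] \<rho> r that by (simp add: \<rho>_def)
    then have "norm (z * deriv (deriv f) z) < (1-\<alpha>) * norm (deriv f z)" using g2 bm up by linarith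
    then show ?thesis using fpos by (simp add: norm_divide divide_less_eq)
  qed
  show ?thesis using A B fpos by auto
qed

lemma f0_extremal:
  assumes al: "\<alpha> < 1" and r: "0 < r0" "r0 < 1" "root_eq b \<alpha> r0" and b: "0 \<le> b"
  shows "complex_of_real r0 * deriv (deriv (f0 b)) (complex_of_real r0) / deriv (f0 b) (complex_of_real r0)
     = of_real (\<alpha> - 1)"
proof -
  have r': "0 \<le> r0" "r0 < 1" using r by auto
  have bal: "4*b*r0 + T2 r0 = (1-\<alpha>) * (1 - 4*b*r0 - T1 r0)" by (rule root_balance[OF r])
  have "4*b*r0 + T2 r0 > 0" using T2_pos[OF r(1,2)] b r by (simp add: add_nonneg_pos)
  then have D1pos: "1 - 4*b*r0 - T1 r0 > 0" using bal al by (simp add: zero_less_mult_iff)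
  have "complex_of_real r0 * deriv (deriv (f0 b)) (complex_of_real r0) / deriv (f0 b) (complex_of_real r0)
     = of_real ((- 4*b*r0 - T2 r0) / (1 - 4*b*r0 - T1 r0))"
    using f0_real(2,4)[OF r', of b] by simp
  also have "(- 4*b*r0 - T2 r0) / (1 - 4*b*r0 - T1 r0) = \<alpha> - 1"
    using bal D1pos by (simp add: field_simps)
  finally show ?thesis .
qed

theorem theorem3p1:
  fixes b \<alpha> r0 r1 :: real
  assumes hb: "0 \<le> b" "b \<le> 1"
    and h\<alpha>: "0 \<le> \<alpha>" "\<alpha> < 1"
    and hr0: "0 < r0" "r0 < 1" "root_eq b \<alpha> r0"
    and hr1: "0 < r1" "r1 < 1" "root_eq b (1/2) r1"
  shows "(\<forall>f\<in>class_F b. \<forall>z. cmod z \<le> r0 \<longrightarrow>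
            cmod (z * deriv (deriv f) z / deriv f z) \<le> 1 - \<alpha>)
       \<and> radius_convexity_order \<alpha> (class_F b) = r0
       \<and> radius_uniform_convexity (class_F b) = r1
       \<and> f0 b \<in> class_F b
       \<and> cmod (complex_of_real r0 * deriv (deriv (f0 b)) (complex_of_real r0)
                / deriv (f0 b) (complex_of_real r0)) = 1 - \<alpha>
       \<and> Re (complex_of_real r0 * deriv (deriv (f0 b)) (complex_of_real r0)
                / deriv (f0 b) (complex_of_real r0)) = \<alpha> - 1"
proof -
  have F0: "f0 b \<in> class_F b" using f0_in_F hb by blast
  have ex0: "complex_of_real r0 * deriv (deriv (f0 b)) (complex_of_real r0) / deriv (f0 b) (complex_of_real r0)
     = of_real (\<alpha> - 1)" by (rule f0_extremal) (use h\<alpha> hr0 hb in auto)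
  have ex1: "complex_of_real r1 * deriv (deriv (f0 b)) (complex_of_real r1) / deriv (f0 b) (complex_of_real r1)
     = of_real (1/2 - 1)" by (rule f0_extremal) (use hr1 hb in auto)
  have i: "\<forall>f\<in>class_F b. \<forall>z. cmod z \<le> r0 \<longrightarrow> cmod (z * deriv (deriv f) z / deriv f z) \<le> 1 - \<alpha>"
    using key[OF hb(1) h\<alpha> hr0] by blast
  have S0: "{r \<in> {0<..1}. \<forall>f\<in>class_F b. \<forall>z. cmod z < r \<longrightarrow>
      deriv f z \<noteq> 0 \<and> Re (1 + z * deriv (deriv f) z / deriv f z) > \<alpha>} = {0<..r0}"
  proof (intro equalityI subsetI)
    fix r assume "r \<in> {r \<in> {0<..1}. \<forall>f\<in>class_F b. \<forall>z. cmod z < r \<longrightarrow>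
      deriv f z \<noteq> 0 \<and> Re (1 + z * deriv (deriv f) z / deriv f z) > \<alpha>}"
    then have r: "0 < r" and H: "\<And>z. cmod z < r \<Longrightarrow> Re (1 + z * deriv (deriv (f0 b)) z / deriv (f0 b) z) > \<alpha>"
      using F0 by auto
    show "r \<in> {0<..r0}"
    proof (rule ccontr)
      assume "r \<notin> {0<..r0}"
      then have "cmod (complex_of_real r0) < r" using r hr0 by auto
      from H[OF this] show False using ex0 by simp
    qed
  next
    fix r assume r: "r \<in> {0<..r0}"
    have "\<forall>f\<in>class_F b. \<forall>z. cmod z < r \<longrightarrow>
      deriv f z \<noteq> 0 \<and> Re (1 + z * deriv (deriv f) z / deriv f z) > \<alpha>"
    proof (intro ballI allI impI)
      fix f z assume f: "f \<in> class_F b" and z: "cmod z < r"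
      have K: "deriv f z \<noteq> 0 \<and> cmod (z * deriv (deriv f) z / deriv f z) < 1 - \<alpha>"
        using key[OF hb(1) h\<alpha> hr0 f, of z] z r by auto
      moreover have "- Re (z * deriv (deriv f) z / deriv f z) \<le> cmod (z * deriv (deriv f) z / deriv f z)"
        using abs_Re_le_cmod[of "z * deriv (deriv f) z / deriv f z"] by linarith
      ultimately show "deriv f z \<noteq> 0 \<and> Re (1 + z * deriv (deriv f) z / deriv f z) > \<alpha>" by simp
    qed
    then show "r \<in> {r \<in> {0<..1}. \<forall>f\<in>class_F b. \<forall>z. cmod z < r \<longrightarrow>
      deriv f z \<noteq> 0 \<and> Re (1 + z * deriv (deriv f) z / deriv f z) > \<alpha>}" using r hr0 by auto
  qed
  have S1: "{r \<in> {0<..1}. \<forall>f\<in>class_F b. \<forall>z. cmod z < r \<longrightarrow>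
      deriv f z \<noteq> 0 \<and>
      Re (1 + z * deriv (deriv f) z / deriv f z) > cmod (z * deriv (deriv f) z / deriv f z)} = {0<..r1}"
  proof (intro equalityI subsetI)
    fix r assume "r \<in> {r \<in> {0<..1}. \<forall>f\<in>class_F b. \<forall>z. cmod z < r \<longrightarrow>
      deriv f z \<noteq> 0 \<and>
      Re (1 + z * deriv (deriv f) z / deriv f z) > cmod (z * deriv (deriv f) z / deriv f z)}"
    then have r: "0 < r" and H: "\<And>z. cmod z < r \<Longrightarrow> Re (1 + z * deriv (deriv (f0 b)) z / deriv (f0 b) z)
       > cmod (z * deriv (deriv (f0 b)) z / deriv (f0 b) z)"
      using F0 by auto
    show "r \<in> {0<..r1}"
    proof (rule ccontr)
      assume "r \<notin> {0<..r1}"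
      then have "cmod (complex_of_real r1) < r" using r hr1 by auto
      from H[OF this] show False using ex1 by simp
    qed
  next
    fix r assume r: "r \<in> {0<..r1}"
    have "\<forall>f\<in>class_F b. \<forall>z. cmod z < r \<longrightarrow>
      deriv f z \<noteq> 0 \<and> Re (1 + z * deriv (deriv f) z / deriv f z) > cmod (z * deriv (deriv f) z / deriv f z)"
    proof (intro ballI allI impI)
      fix f z assume f: "f \<in> class_F b" and z: "cmod z < r"
      have K: "deriv f z \<noteq> 0 \<and> cmod (z * deriv (deriv f) z / deriv f z) < 1 - 1/2"
        using key[OF hb(1) _ _ hr1 f, of z] z r by auto
      moreover have "- Re (z * deriv (deriv f) z / deriv f z) \<le> cmod (z * deriv (deriv f) z / deriv f z)"
        using abs_Re_le_cmod[of "z * deriv (deriv f) z / deriv f z"] by linarith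
      ultimately show "deriv f z \<noteq> 0 \<and> Re (1 + z * deriv (deriv f) z / deriv f z) > cmod (z * deriv (deriv f) z / deriv f z)" by simp
    qed
    then show "r \<in> {r \<in> {0<..1}. \<forall>f\<in>class_F b. \<forall>z. cmod z < r \<longrightarrow>
      deriv f z \<noteq> 0 \<and>
      Re (1 + z * deriv (deriv f) z / deriv f z) > cmod (z * deriv (deriv f) z / deriv f z)}" using r hr1 by auto
  qed
  have ii: "radius_convexity_order \<alpha> (class_F b) = r0"
    unfolding radius_convexity_order_def S0 using hr0 by simp
  have iii: "radius_uniform_convexity (class_F b) = r1"
    unfolding radius_uniform_convexity_def S1 using hr1 by simp
  have "cmod (complex_of_real (\<alpha> - 1)) = 1 - \<alpha>" using h\<alpha> by (simp only: norm_of_real)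
  then show ?thesis using i ii iii F0 ex0 h\<alpha> by (simp del: of_real_diff)
qed

end
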